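(* Fix a target trajectory $\bm{p}_O:[0,\infty)\to\mathbb{R}^3$ (continuously differentiable) and an end-effector trajectory $\bm{p}_E:[0,\infty)\to\mathbb{R}^3$ obeying $$\dot{\bm{p}}_E(t)=\dot{\bm{p}}_{E,d}(t)+\bm{\Delta}(t),$$ where $\bm{\Delta}$ is an unknown term satisfying $\|\bm{\Delta}(t)\|\le\delta_E$ for all $t\ge0$, for some constant $\delta_E>0$. Let $\bm{e}_E=\bm{p}_E-\bm{p}_O=[e_{E,x},e_{E,y},e_{E,z}]^T$. Let $\bm{\Lambda}$ and $\bm{K}$ be positive diagonal $3\times3$ matrices and set $$\delta_{\bm z}=\frac{(\lambda_{\min}(\bm\Lambda)+\lambda_{\max}(\bm\Lambda))\,\delta_E}{\lambda_{\min}(\bm\Lambda)\,\lambda_{\min}(\bm K)}.$$ For each $\nu\in\{x,y,z\}$ let $\rho_\nu(t)=(\rho_{\nu,0}-\rho_{\nu,\infty})e^{-l_E t}+\rho_{\nu,\infty}$ with constants $l_E>0$, $\rho_{\nu,\infty}>0$ and $\rho_{\nu,0}>|e_{E,\nu}(0)|$, and assume $\bm K$ is chosen so that $\delta_{\bm z}<\min\{\rho_{\nu,\infty},\ \rho_{\nu,0}-|e_{E,\nu}(0)|\}$ for every $\nu$. Let $b_\nu=l_E e_{E,\nu}(0)+\dot e_{E,\nu}(0)$ and choose $c_\nu>0$ with $c_\nu>|b_\nu|/(\rho_{\nu,0}-\delta_{\bm z}-|e_{E,\nu}(0)|)$. Define the preset trajectory $\bm\alpha(t)=[\alpha_x(t),\alpha_y(t),\alpha_z(t)]^T$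 by $$\alpha_\nu(t)=\frac{b_\nu}{c_\nu}(1-e^{-c_\nu t})e^{-l_E t}+e_{E,\nu}(0)e^{-l_E t},$$ and set $\bm z=\bm e_E-\bm\alpha(t)$, $\bm s=\bm z+\bm\Lambda\int_0^t\bm z\,d\tau$. If the desired end-effector velocity is given by the control law $$\dot{\bm p}_{E,d}=\dot{\bm p}_O+\dot{\bm\alpha}-\bm\Lambda\bm z-\bm K\bm s,$$ then the tracking error $\bm e_E$ is bounded and $|e_{E,\nu}(t)|<\rho_\nu(t)$ for all $t\ge0$ and all $\nu\in\{x,y,z\}$.
   Context: This is a kinematic tracking-control setting for the end-effector of an aerial manipulator: $\bm p_E$ is the end-effector position, $\bm p_O$ the target position, $\dot{\bm p}_{E,d}$ the commanded end-effector velocity, and $\bm\Delta$ the (bounded) mismatch between commanded and realized velocity. $\rho_\nu$ is the performance-envelope boundary function for coordinate $\nu$; $\dot e_{E,\nu}(0)$ is the initial rate of the tracking error. $\lambda_{\min},\lambda_{\max}$ denote minimum and maximum eigenvalues. *)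

theory Defs
  imports "HOL-Analysis.Analysis"
begin

definition eigvals :: "real^'n^'n \<Rightarrow> real set" where
  "eigvals A = {\<mu>. \<exists>v. v \<noteq> 0 \<and> A *v v = \<mu> *\<^sub>R v}"

definition lambda_min :: "real^'n^'n \<Rightarrow> real" where
  "lambda_min A = Min (eigvals A)"

definition lambda_max :: "real^'n^'n \<Rightarrow> real" where
  "lambda_max A = Max (eigvals A)"

definition pos_diag :: "real^'n^'n \<Rightarrow> bool" where
  "pos_diag A \<longleftrightarrow> (\<forall>i j. i \<noteq> j \<longrightarrow> A $ i $ j = 0) \<and> (\<forall>i. A $ i $ i > 0)"

end

theory Submission imports Defs begin
lemma vec_nth_deriv:
  fixes f :: "real \<Rightarrow> real^'n"
  assumes "(f has_vector_derivative f') F"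
  shows "((\<lambda>x. f x $ i) has_real_derivative f' $ i) F"
proof -
  have "((\<lambda>x. f x $ i) has_derivative (\<lambda>h. (h *\<^sub>R f') $ i)) F"
    using bounded_linear.has_derivative[OF bounded_linear_vec_nth assms[unfolded has_vector_derivative_def]] .
  moreover have "(\<lambda>h::real. h * c) = (*) c" for c by (rule ext) simp
  ultimately show ?thesis by (simp add: has_field_derivative_def)
qed

lemma vec_deriv:
  fixes f :: "real \<Rightarrow> real^'n"
  assumes "\<And>i. ((\<lambda>t. f t $ i) has_real_derivative f' i) (at x within S)"
  shows "(f has_vector_derivative (\<chi> i. f' i)) (at x within S)"
proof -
  have e: "(\<lambda>h::real. h * c) = (*) c" for c by (rule ext) simp
  have "\<forall>i\<in>Basis. ((\<lambda>x. f x \<bullet> i) has_derivative (\<lambda>h. (h *\<^sub>R (\<chi> i. f' i)) \<bullet> i)) (at x within S)"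
    using assms by (auto simp: Basis_vec_def inner_axis has_field_derivative_def e)
  then show ?thesis unfolding has_vector_derivative_def by (subst has_derivative_componentwise_within)
qed

lemma decr:
  fixes f :: "real \<Rightarrow> real"
  assumes "0 \<le> T" "\<And>x. x \<in> {0..T} \<Longrightarrow> (f has_real_derivative f' x) (at x within {0..T})"
    "\<And>x. x \<in> {0..T} \<Longrightarrow> f' x \<le> 0"
  shows "f T \<le> f 0"
proof (rule DERIV_nonpos_imp_decreasing_open[OF assms(1)])
  show "continuous_on {0..T} f" using assms(2) by (rule DERIV_continuous_on)
  fix x assume "0 < x" "x < T"
  then have "(f has_real_derivative f' x) (at x)" using assms(2)[of x] at_within_Icc_at[of 0 x T] by auto
  then show "\<exists>y. (f has_real_derivative y) (at x) \<and> y \<le> 0" using assms(3)[of x] \<open>0<x\<close> \<open>x<T\<close> by auto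
qed

lemma eig_diag:
  fixes A :: "real^'n^'n"
  assumes "(\<forall>i j. i \<noteq> j \<longrightarrow> A $ i $ j = 0)" 
  shows "{\<mu>. \<exists>v. v \<noteq> 0 \<and> A *v v = \<mu> *\<^sub>R v} = range (\<lambda>i. A $ i $ i)"
proof
  show "{\<mu>. \<exists>v. v \<noteq> 0 \<and> A *v v = \<mu> *\<^sub>R v} \<subseteq> range (\<lambda>i. A $ i $ i)"
  proof
    fix \<mu> assume "\<mu> \<in> {\<mu>. \<exists>v. v \<noteq> 0 \<and> A *v v = \<mu> *\<^sub>R v}"
    then obtain v where v: "v \<noteq> 0" "A *v v = \<mu> *\<^sub>R v" by auto
    from v(1) obtain i where i: "v $ i \<noteq> 0" by (auto simp: vec_eq_iff)
    have "(A *v v) $ i = (\<Sum>j\<in>UNIV. A$i$j * v$j)" by (simp add: matrix_vector_mult_def)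
    also have "\<dots> = A$i$i * v$i + (\<Sum>j\<in>UNIV-{i}. A$i$j * v$j)"
      by (subst sum.remove[of UNIV i]) auto
    also have "(\<Sum>j\<in>UNIV-{i}. A$i$j * v$j) = 0" using assms by (intro sum.neutral) auto
    finally have "(A *v v) $ i = A$i$i * v$i" by simp
    moreover have "(A *v v) $ i = \<mu> * v$i" using v(2) by simp
    ultimately have "A$i$i = \<mu>" using i by simp
    then show "\<mu> \<in> range (\<lambda>i. A $ i $ i)" by blast
  qed
  show "range (\<lambda>i. A $ i $ i) \<subseteq> {\<mu>. \<exists>v. v \<noteq> 0 \<and> A *v v = \<mu> *\<^sub>R v}"
  proof clarify
    fix i
    have "A *v axis i 1 = A $ i $ i *\<^sub>R axis i 1"
      unfolding matrix_vector_mult_basis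
    proof (subst vec_eq_iff, rule allI)
      fix j
      show "column i A $ j = (A $ i $ i *\<^sub>R axis i 1) $ j"
        using assms by (cases "j = i") (simp_all add: column_def axis_def)
    qed
    moreover have "axis i (1::real) \<noteq> 0" by (simp add: axis_eq_0_iff)
    ultimately show "\<exists>v. v \<noteq> 0 \<and> A *v v = A $ i $ i *\<^sub>R v" by blast
  qed
qed

lemma diag_mult:
  fixes M :: "real^'n^'n"
  assumes "\<forall>i j. i \<noteq> j \<longrightarrow> M $ i $ j = 0"
  shows "(M *v x) $ i = M $ i $ i * x $ i"
proof -
  have "(M *v x) $ i = (\<Sum>j\<in>UNIV. M$i$j * x$j)" by (simp add: matrix_vector_mult_def)
  also have "\<dots> = M$i$i * x$i + (\<Sum>j\<in>UNIV-{i}. M$i$j * x$j)"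
    by (subst sum.remove[of UNIV i]) auto
  also have "(\<Sum>j\<in>UNIV-{i}. M$i$j * x$j) = 0" using assms by (intro sum.neutral) auto
  finally show ?thesis by simp
qed

lemma eig_facts:
  fixes M :: "real^'n^'n"
  assumes "pos_diag M"
  shows "lambda_min M > 0" "\<And>i. lambda_min M \<le> M$i$i" "\<And>i. M$i$i \<le> lambda_max M"
proof -
  have d: "\<forall>i j. i \<noteq> j \<longrightarrow> M $ i $ j = 0" and p: "\<forall>i. M $ i $ i > 0"
    using assms unfolding pos_diag_def by auto
  have e: "eigvals M = range (\<lambda>i. M $ i $ i)" unfolding eigvals_def by (rule eig_diag[OF d])
  have f: "finite (range (\<lambda>i. M $ i $ i))" by simp
  have ne: "range (\<lambda>i. M $ i $ i) \<noteq> {}" by simp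
  have "Min (range (\<lambda>i. M $ i $ i)) \<in> range (\<lambda>i. M $ i $ i)" by (rule Min_in[OF f ne])
  then obtain j where "Min (range (\<lambda>i. M $ i $ i)) = M $ j $ j" by blast
  then show "lambda_min M > 0" unfolding lambda_min_def e using p by simp
  show "lambda_min M \<le> M$i$i" for i unfolding lambda_min_def e by (rule Min_le[OF f rangeI])
  show "M$i$i \<le> lambda_max M" for i unfolding lambda_max_def e by (rule Max_ge[OF f rangeI])
qed

lemma lin_bound:
  fixes F G :: "real \<Rightarrow> real"
  assumes t: "0 \<le> t" and a: "a > 0" and F0: "F 0 = 0"
    and dF: "\<And>x U. 0 \<le> x \<Longrightarrow> x \<le> U \<Longrightarrow> (F has_real_derivative (-a * F x + G x)) (at x within {0..U})"
    and G: "\<And>x. 0 \<le> x \<Longrightarrow> G x \<le> m"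
  shows "a * F t \<le> m * (1 - exp (- a * t))"
proof -
  define g where "g = (\<lambda>u. exp (a*u) * F u - m / a * exp (a*u))"
  have "g t \<le> g 0"
  proof (rule decr[OF t])
    fix x assume x: "x \<in> {0..t}"
    have de: "((\<lambda>u. exp (a*u)) has_real_derivative (exp (a*x) * a)) (at x within {0..t})"
      by (auto intro!: derivative_eq_intros)
    have d0: "(g has_real_derivative (exp (a*x) * a * F x + (-a * F x + G x) * exp (a*x) - m / a * (exp (a*x) * a))) (at x within {0..t})"
      unfolding g_def using x by (intro DERIV_diff DERIV_mult de dF DERIV_cmult) auto
    have m1: "m / a * (exp (a*x) * a) = m * exp (a*x)" using a by simp
    have "exp (a*x) * a * F x + (-a * F x + G x) * exp (a*x) - m / a * (exp (a*x) * a) = exp (a*x) * (G x - m)"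
      unfolding m1 by (simp add: algebra_simps)
    with d0 show "(g has_real_derivative exp (a*x) * (G x - m)) (at x within {0..t})" by simp
    show "exp (a*x) * (G x - m) \<le> 0" using G[of x] x by (simp add: mult_nonneg_nonpos)
  qed
  then have "exp (a*t) * F t - m / a * exp (a*t) \<le> - m / a" by (simp add: g_def F0)
  then have "a * (exp (a*t) * F t - m / a * exp (a*t)) \<le> a * (- m / a)" using a by (intro mult_left_mono) auto
  moreover have "a * (exp (a*t) * F t - m / a * exp (a*t)) = exp (a*t) * (a * F t) - m * exp (a*t)" using a by (simp add: algebra_simps)
  moreover have "a * (- m / a) = - m" using a by simp
  ultimately have "exp (a*t) * (a * F t) \<le> m * (exp (a*t) - 1)" by (simp add: algebra_simps)
  then have h1: "exp (- a*t) * (exp (a*t) * (a * F t)) \<le> exp (- a*t) * (m * (exp (a*t) - 1))"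
    by (simp add: mult_left_mono)
  have h3: "exp (- a*t) * exp (a*t) = 1" by (simp add: exp_add[symmetric])
  have h2: "exp (- a*t) * (exp (a*t) * (a * F t)) = a * F t"
    by (subst mult.assoc[symmetric]) (simp only: h3 mult_1)
  have h4: "exp (- a*t) * (m * (exp (a*t) - 1)) = m * (exp (- a*t) * exp (a*t)) - m * exp (- a*t)"
    by (simp add: algebra_simps)
  have h5: "exp (- a*t) * (m * (exp (a*t) - 1)) = m - m * exp (- a*t)"
    unfolding h4 h3 by simp
  have "a * F t \<le> m - m * exp (- a*t)" using h1 h2 h5 by linarith
  then show ?thesis by (simp add: right_diff_distrib)
qed

theorem theorem1:
  fixes pO vO pE vE pd \<Delta> alpha z s :: "real \<Rightarrow> real^3"
    and Lam K :: "real^3^3"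
    and \<delta>E lE \<delta>z :: real
    and rho0 rhoinf b c :: "real^3"
    and rho :: "3 \<Rightarrow> real \<Rightarrow> real"
  assumes pO_deriv: "\<forall>t\<ge>0. (pO has_vector_derivative vO t) (at t within {0..})"
    and vO_cont: "continuous_on {0..} vO"
    and pE_deriv: "\<forall>t\<ge>0. (pE has_vector_derivative vE t) (at t within {0..})"
    and pE_dyn: "\<forall>t\<ge>0. vE t = pd t + \<Delta> t"
    and \<delta>E_pos: "\<delta>E > 0"
    and \<Delta>_bound: "\<forall>t\<ge>0. norm (\<Delta> t) \<le> \<delta>E"
    and Lam_diag: "pos_diag Lam"
    and K_diag: "pos_diag K"
    and \<delta>z_def: "\<delta>z = (lambda_min Lam + lambda_max Lam) * \<delta>E / (lambda_min Lam * lambda_min K)"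
    and lE_pos: "lE > 0"
    and rhoinf_pos: "\<forall>\<nu>. rhoinf $ \<nu> > 0"
    and rho0_gt: "\<forall>\<nu>. rho0 $ \<nu> > \<bar>(pE 0 - pO 0) $ \<nu>\<bar>"
    and rho_def: "\<forall>\<nu> t. rho \<nu> t = (rho0 $ \<nu> - rhoinf $ \<nu>) * exp (- lE * t) + rhoinf $ \<nu>"
    and K_choice: "\<forall>\<nu>. \<delta>z < min (rhoinf $ \<nu>) (rho0 $ \<nu> - \<bar>(pE 0 - pO 0) $ \<nu>\<bar>)"
    and b_def: "b = lE *\<^sub>R (pE 0 - pO 0) + (vE 0 - vO 0)"
    and c_choice: "\<forall>\<nu>. c $ \<nu> > 0 \<and>
        c $ \<nu> > \<bar>b $ \<nu>\<bar> / (rho0 $ \<nu> - \<delta>z - \<bar>(pE 0 - pO 0) $ \<nu>\<bar>)"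
    and alpha_def: "alpha = (\<lambda>t. \<chi> \<nu>. b $ \<nu> / c $ \<nu> * (1 - exp (- c $ \<nu> * t)) * exp (- lE * t)
                                   + (pE 0 - pO 0) $ \<nu> * exp (- lE * t))"
    and z_def: "z = (\<lambda>t. (pE t - pO t) - alpha t)"
    and s_def: "s = (\<lambda>t. z t + Lam *v integral {0..t} z)"
    and control: "\<forall>t\<ge>0. pd t = vO t + vector_derivative alpha (at t) - Lam *v z t - K *v s t"
  shows "bounded ((\<lambda>t. pE t - pO t) ` {0..}) \<and>
         (\<forall>t\<ge>0. \<forall>\<nu>. \<bar>(pE t - pO t) $ \<nu>\<bar> < rho \<nu> t)"
proof -
  define e0 where "e0 = pE 0 - pO 0"
  define \<sigma>0 where "\<sigma>0 = (0::real)"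
  define Ad where "Ad = (\<lambda>i t. b $ i / c $ i * (c $ i * exp (- c $ i * t)) * exp (- lE * t)
      + b $ i / c $ i * (1 - exp (- c $ i * t)) * (- lE * exp (- lE * t))
      - lE * (e0 $ i * exp (- lE * t)))"
  have dAc: "((\<lambda>t. alpha t $ i) has_real_derivative Ad i t) (at t)" for i t
  proof -
    have "((\<lambda>t. b $ i / c $ i * (1 - exp (- c $ i * t)) * exp (- lE * t)
                                   + e0 $ i * exp (- lE * t)) has_real_derivative Ad i t) (at t)"
      unfolding Ad_def by (rule derivative_eq_intros refl | simp)+
    then show ?thesis by (simp add: alpha_def e0_def)
  qed
  have dAv: "(alpha has_vector_derivative (\<chi> i. Ad i t)) (at t)" for t
    using vec_deriv[of alpha "\<lambda>i. Ad i t" t UNIV] dAc by simp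
  have vdA: "vector_derivative alpha (at t) = (\<chi> i. Ad i t)" for t
    using vector_derivative_at[OF dAv] .
  have cA: "continuous_on X alpha" for X
    using dAv by (meson continuous_at_imp_continuous_on has_vector_derivative_continuous)
  have dEv: "((\<lambda>t. pE t - pO t) has_vector_derivative (vE t - vO t)) (at t within {0..})" if "t \<ge> 0" for t
    using pE_deriv pO_deriv that by (intro has_vector_derivative_diff) auto
  have cE: "continuous_on {0..} (\<lambda>t. pE t - pO t)"
    using dEv by (meson atLeast_iff continuous_on_eq_continuous_within has_vector_derivative_continuous)
  have cz: "continuous_on {0..T} z" for T
    unfolding z_def
    by (intro continuous_on_diff cA continuous_on_subset[OF cE]) auto
  have main: "\<bar>(pE T - pO T) $ \<nu>\<bar> < rho \<nu> T" if T: "0 \<le> T" for \<nu> T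
  proof -
    define l where "l = Lam $ \<nu> $ \<nu>"
    define k where "k = K $ \<nu> $ \<nu>"
    have Ld: "\<forall>i j. i \<noteq> j \<longrightarrow> Lam $ i $ j = 0" using Lam_diag unfolding pos_diag_def by blast
    have Kd: "\<forall>i j. i \<noteq> j \<longrightarrow> K $ i $ j = 0" using K_diag unfolding pos_diag_def by blast
    have l0: "l > 0" using Lam_diag unfolding pos_diag_def l_def by blast
    have k0: "k > 0" using K_diag unfolding pos_diag_def k_def by blast
    define \<sigma> where "\<sigma> = \<delta>E / k"
    have \<sigma>0: "\<sigma> > 0" using k0 \<delta>E_pos by (simp add: \<sigma>_def)
    have \<sigma>2: "2 * \<sigma> \<le> \<delta>z"
    proof -
      define lm lM km where "lm = lambda_min Lam" "lM = lambda_max Lam" "km = lambda_min K"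
      have lm0: "lm > 0" and lml: "lm \<le> l" and lMl: "l \<le> lM" and km0: "km > 0" and kmk: "km \<le> k"
        using eig_facts[OF Lam_diag] eig_facts[OF K_diag] by (auto simp: lm_lM_km_def l_def k_def)
      have "2 * \<sigma> \<le> 2 * (\<delta>E / km)" unfolding \<sigma>_def using km0 kmk \<delta>E_pos
        by (simp add: frac_le)
      also have "\<dots> \<le> ((lm + lM) / lm) * (\<delta>E / km)"
      proof (rule mult_right_mono)
        show "2 \<le> (lm + lM) / lm" using lm0 lml lMl by (simp add: field_simps)
        show "0 \<le> \<delta>E / km" using km0 \<delta>E_pos by simp
      qed
      also have "\<dots> = \<delta>z" unfolding \<delta>z_def lm_lM_km_def by simp
      finally show ?thesis .
    qed
    define Z where "Z = (\<lambda>t. z t $ \<nu>)"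
    define W where "W = (\<lambda>t. integral {0..t} z $ \<nu>)"
    define S where "S = (\<lambda>t. Z t + l * W t)"
    define D where "D = (\<lambda>t. \<Delta> t $ \<nu>)"
    have Seq: "s t $ \<nu> = S t" for t
      by (simp add: s_def S_def Z_def W_def l_def diag_mult[OF Ld])
    have key: "(vE t - vO t) $ \<nu> - Ad \<nu> t = - l * Z t - k * S t + D t" if "t \<ge> 0" for t
    proof -
      have "vE t - vO t = vector_derivative alpha (at t) - Lam *v z t - K *v s t + \<Delta> t"
        using pE_dyn control that by simp
      then have "(vE t - vO t) $ \<nu> = Ad \<nu> t - l * Z t - k * S t + D t"
        by (simp add: vdA diag_mult[OF Ld] diag_mult[OF Kd] l_def k_def Z_def D_def Seq[symmetric])
      then show ?thesis by simp
    qed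
    have Zeq: "Z = (\<lambda>t. (pE t - pO t) $ \<nu> - alpha t $ \<nu>)" by (simp add: Z_def z_def fun_eq_iff)
    have dZ: "(Z has_real_derivative (- l * Z x + (- k * S x + D x))) (at x within {0..U})"
      if "0 \<le> x" "x \<le> U" for x U
    proof -
      have "((\<lambda>t. pE t - pO t) has_vector_derivative (vE x - vO x)) (at x within {0..U})"
        using has_vector_derivative_within_subset[OF dEv[OF that(1)]] by auto
      from vec_nth_deriv[OF this, of \<nu>]
      have "((\<lambda>t. (pE t - pO t) $ \<nu>) has_real_derivative (vE x - vO x) $ \<nu>) (at x within {0..U})" .
      from DERIV_diff[OF this has_field_derivative_at_within[OF dAc]]
      have d: "(Z has_real_derivative (vE x - vO x) $ \<nu> - Ad \<nu> x) (at x within {0..U})"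
        unfolding Zeq .
      have eq: "(vE x - vO x) $ \<nu> - Ad \<nu> x = - l * Z x + (- k * S x + D x)" using key[OF that(1)] by simp
      show ?thesis unfolding eq[symmetric] by (rule d)
    qed
    have dW: "(W has_real_derivative (- l * W x + S x)) (at x within {0..U})"
      if "0 \<le> x" "x \<le> U" for x U
    proof -
      have "(W has_real_derivative Z x) (at x within {0..U})"
        unfolding W_def using vec_nth_deriv[OF integral_has_vector_derivative[OF cz], of x U \<nu>] that by (simp add: Z_def)
      then show ?thesis by (simp add: S_def)
    qed
    have dS: "(S has_real_derivative (- k * S x + D x)) (at x within {0..U})"
      if "0 \<le> x" "x \<le> U" for x U
    proof -
      note d0 = DERIV_add[OF dZ[OF that] DERIV_cmult[OF dW[OF that], of l]]
      have eq: "- l * Z x + (- k * S x + D x) + l * (- l * W x + S x) = - k * S x + D x"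
        by (simp add: S_def algebra_simps)
      have fS: "(\<lambda>x. Z x + l * W x) = S" by (simp add: S_def)
      show ?thesis using d0 unfolding eq fS .
    qed
    have Z0: "Z 0 = 0" by (simp add: Z_def z_def alpha_def)
    have W0: "W 0 = 0" by (simp add: W_def)
    have S0: "S 0 = 0" by (simp add: S_def Z0 W0)
    have Dle: "D t \<le> \<delta>E" "- D t \<le> \<delta>E" if "t \<ge> 0" for t
      using component_le_norm_cart[of "\<Delta> t" \<nu>] \<Delta>_bound that unfolding D_def by force+
    have Sb: "\<bar>S t\<bar> \<le> \<sigma>" if "t \<ge> 0" for t
    proof -
      have "k * S t \<le> \<delta>E * (1 - exp (- k * t))"
        by (rule lin_bound[OF that k0 S0 dS Dle(1)])
      moreover have "k * (- S t) \<le> \<delta>E * (1 - exp (- k * t))"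
      proof (rule lin_bound[where t=t and a=k and F="\<lambda>u. - S u" and G="\<lambda>u. - D u" and m="\<delta>E"])
        fix x U :: real assume xU: "0 \<le> x" "x \<le> U"
        have eq: "- k * (- S x) + (- D x) = - (- k * S x + D x)" by simp
        show "((\<lambda>u. - S u) has_real_derivative - k * (- S x) + (- D x)) (at x within {0..U})"
          unfolding eq by (rule DERIV_minus[OF dS[OF xU]])
      qed (use that k0 S0 Dle(2) in auto)
      moreover have "\<delta>E * (1 - exp (- k * t)) \<le> \<delta>E" using \<delta>E_pos by simp
      ultimately have "\<bar>k * S t\<bar> \<le> \<delta>E" by linarith
      then show ?thesis using k0 unfolding \<sigma>_def by (simp add: abs_mult field_simps)
    qed
    have Zb: "\<bar>Z T\<bar> < 2 * \<sigma>"
    proof -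
      have SS: "S u \<le> \<sigma>" "- S u \<le> \<sigma>" if "u \<ge> 0" for u using Sb[OF that] by auto
      have "l * W T \<le> \<sigma> * (1 - exp (- l * T))"
        by (rule lin_bound[OF T l0 W0 dW SS(1)])
      moreover have "l * (- W T) \<le> \<sigma> * (1 - exp (- l * T))"
      proof (rule lin_bound[where t=T and a=l and F="\<lambda>u. - W u" and G="\<lambda>u. - S u" and m="\<sigma>"])
        fix x U :: real assume xU: "0 \<le> x" "x \<le> U"
        have eq: "- l * (- W x) + (- S x) = - (- l * W x + S x)" by simp
        show "((\<lambda>u. - W u) has_real_derivative - l * (- W x) + (- S x)) (at x within {0..U})"
          unfolding eq by (rule DERIV_minus[OF dW[OF xU]])
      qed (use T l0 W0 SS(2) in auto)
      moreover have "\<sigma> * (1 - exp (- l * T)) < \<sigma>" using \<sigma>0 by simp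
      moreover have "Z T = S T - l * W T" by (simp add: S_def)
      ultimately show ?thesis using Sb[OF T] by linarith
    qed
    define x where "x = exp (- lE * T)"
    have x0: "0 < x" "x \<le> 1" using lE_pos T by (auto simp: x_def)
    have bc: "\<bar>b $ \<nu>\<bar> / c $ \<nu> < rho0 $ \<nu> - \<delta>z - \<bar>e0 $ \<nu>\<bar>"
    proof -
      have den: "rho0 $ \<nu> - \<delta>z - \<bar>e0 $ \<nu>\<bar> > 0" using K_choice[rule_format, of \<nu>] by (simp add: e0_def)
      have "\<bar>b $ \<nu>\<bar> / (rho0 $ \<nu> - \<delta>z - \<bar>e0 $ \<nu>\<bar>) < c $ \<nu>" using c_choice by (simp add: e0_def)
      then have "\<bar>b $ \<nu>\<bar> < c $ \<nu> * (rho0 $ \<nu> - \<delta>z - \<bar>e0 $ \<nu>\<bar>)" using den by (simp add: pos_divide_less_eq mult.commute)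
      then show ?thesis using c_choice by (simp add: pos_divide_less_eq mult.commute)
    qed
    have Ab: "\<bar>alpha T $ \<nu>\<bar> \<le> (\<bar>b $ \<nu>\<bar> / c $ \<nu> + \<bar>e0 $ \<nu>\<bar>) * x"
    proof -
      have q: "0 \<le> 1 - exp (- c $ \<nu> * T)" "1 - exp (- c $ \<nu> * T) \<le> 1"
        using c_choice T by (auto intro: mult_nonneg_nonneg less_imp_le)
      have "\<bar>b $ \<nu> / c $ \<nu> * (1 - exp (- c $ \<nu> * T)) * x\<bar> \<le> \<bar>b $ \<nu>\<bar> / c $ \<nu> * x"
      proof -
        have cpos: "c $ \<nu> > 0" using c_choice by blast
        have h1: "\<bar>b $ \<nu> / c $ \<nu> * (1 - exp (- c $ \<nu> * T)) * x\<bar> = (\<bar>b $ \<nu>\<bar> / c $ \<nu> * x) * (1 - exp (- c $ \<nu> * T))"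
          using cpos q(1) x0 by (simp add: abs_mult abs_of_nonneg)
        have h2: "(\<bar>b $ \<nu>\<bar> / c $ \<nu> * x) * (1 - exp (- c $ \<nu> * T)) \<le> \<bar>b $ \<nu>\<bar> / c $ \<nu> * x"
          by (rule mult_left_le) (use q cpos x0 in auto)
        show ?thesis using h1 h2 by simp
      qed
      moreover have aeq: "alpha T $ \<nu> = b $ \<nu> / c $ \<nu> * (1 - exp (- c $ \<nu> * T)) * x + e0 $ \<nu> * x"
        by (simp add: alpha_def x_def e0_def)
      moreover have "\<bar>e0 $ \<nu> * x\<bar> = \<bar>e0 $ \<nu>\<bar> * x" using x0 by (simp add: abs_mult)
      moreover have "\<bar>alpha T $ \<nu>\<bar> \<le> \<bar>b $ \<nu> / c $ \<nu> * (1 - exp (- c $ \<nu> * T)) * x\<bar> + \<bar>e0 $ \<nu> * x\<bar>"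
        unfolding aeq by (rule abs_triangle_ineq)
      moreover have "(\<bar>b $ \<nu>\<bar> / c $ \<nu> + \<bar>e0 $ \<nu>\<bar>) * x = \<bar>b $ \<nu>\<bar> / c $ \<nu> * x + \<bar>e0 $ \<nu>\<bar> * x"
        by (simp add: distrib_right)
      ultimately show ?thesis by linarith
    qed
    have Eeq: "(pE T - pO T) $ \<nu> = Z T + alpha T $ \<nu>" by (simp add: Z_def z_def)
    have f0: "\<bar>(pE T - pO T) $ \<nu>\<bar> \<le> \<bar>Z T\<bar> + \<bar>alpha T $ \<nu>\<bar>"
      unfolding Eeq by (rule abs_triangle_ineq)
    have "\<bar>b $ \<nu>\<bar> / c $ \<nu> * x \<le> (rho0 $ \<nu> - \<delta>z - \<bar>e0 $ \<nu>\<bar>) * x"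
      using bc x0 by (intro mult_right_mono) auto
    then have f1: "\<bar>b $ \<nu>\<bar> / c $ \<nu> * x \<le> rho0 $ \<nu> * x - \<delta>z * x - \<bar>e0 $ \<nu>\<bar> * x"
      by (simp add: left_diff_distrib)
    have "\<delta>z * (1 - x) \<le> rhoinf $ \<nu> * (1 - x)"
      using K_choice[rule_format, of \<nu>] x0 by (intro mult_right_mono) auto
    then have f2: "\<delta>z - \<delta>z * x \<le> rhoinf $ \<nu> - rhoinf $ \<nu> * x" by (simp add: right_diff_distrib)
    have f3: "rho \<nu> T = rho0 $ \<nu> * x - rhoinf $ \<nu> * x + rhoinf $ \<nu>"
      by (simp add: rho_def x_def left_diff_distrib)
    have f4: "\<bar>alpha T $ \<nu>\<bar> \<le> \<bar>b $ \<nu>\<bar> / c $ \<nu> * x + \<bar>e0 $ \<nu>\<bar> * x"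
      using Ab by (simp add: distrib_right)
    show ?thesis using f0 f1 f2 f3 f4 Zb \<sigma>2 by linarith
  qed
  have rb: "rho \<nu> t \<le> \<bar>rho0 $ \<nu> - rhoinf $ \<nu>\<bar> + rhoinf $ \<nu>" if "t \<ge> 0" for \<nu> t
  proof -
    have x1: "exp (- lE * t) \<le> 1" "0 \<le> exp (- lE * t)" using lE_pos that by auto
    have "(rho0 $ \<nu> - rhoinf $ \<nu>) * exp (- lE * t) \<le> \<bar>rho0 $ \<nu> - rhoinf $ \<nu>\<bar> * exp (- lE * t)"
      using x1 by (intro mult_right_mono) auto
    also have "\<dots> \<le> \<bar>rho0 $ \<nu> - rhoinf $ \<nu>\<bar>" using x1 by (intro mult_left_le) auto
    finally show ?thesis using rho_def by simp
  qed
  have "bounded ((\<lambda>t. pE t - pO t) ` {0..})"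
    unfolding bounded_iff
  proof (intro exI ballI)
    fix y assume "y \<in> (\<lambda>t. pE t - pO t) ` {0..}"
    then obtain t where t: "t \<ge> 0" and y: "y = pE t - pO t" by auto
    have "norm y \<le> (\<Sum>\<nu>\<in>UNIV. \<bar>y $ \<nu>\<bar>)" by (rule norm_le_l1_cart)
    also have "\<dots> \<le> (\<Sum>\<nu>\<in>UNIV. \<bar>rho0 $ \<nu> - rhoinf $ \<nu>\<bar> + rhoinf $ \<nu>)"
    proof (rule sum_mono)
      fix \<nu> :: 3
      show "\<bar>y $ \<nu>\<bar> \<le> \<bar>rho0 $ \<nu> - rhoinf $ \<nu>\<bar> + rhoinf $ \<nu>"
        using main[OF t, of \<nu>] rb[OF t, of \<nu>] y by simp
    qed
    finally show "norm y \<le> (\<Sum>\<nu>\<in>UNIV. \<bar>rho0 $ \<nu> - rhoinf $ \<nu>\<bar> + rhoinf $ \<nu>)" .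
  qed
  then show ?thesis using main by blast
qed

end
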